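(* Let $k:\mathcal{Z}\times\mathcal{Z}\to\mathbb{R}$ be a positive definite kernel with polynomial eigendecay on a $d$-dimensional hypercube $\mathcal{Z}$ of side length $\rho_{\mathcal{Z}}$, and let $\lambda>0$. Then the maximum information gain satisfies $$\Gamma_{k,\lambda}(T)=\mathcal{O}\!\left(T^{\frac1{\tilde p}}(\log T)^{1-\frac1{\tilde p}}\rho_{\mathcal{Z}}^{\frac{\alpha}{\tilde p}}\right),$$ with hidden constants depending on the kernel constants and $\lambda$ but not on $T$ or $\rho_{\mathcal{Z}}$.
   Context: $k$ is continuous with $k(z,z)\le1$. Let $\{(\sigma_m,\phi_m)\}_{m\ge1}$ be the Mercer eigenvalue–eigenfunction pairs of $k$ on $\mathcal{Z}$ with respect to Lebesgue measure, eigenvalues decreasing, so that $k(z,z')=\sum_m\sigma_m\phi_m(z)\phi_m(z')$. Polynomial eigendecay means: there are $C_p,\alpha>0$ and $p>1$ with $\sigma_m\le C_pm^{-p}\rho_{\mathcal{Z}}^{\alpha}$ for all $m\in\mathbb{N}$, and there is $\eta\ge0$ such that $m^{-p\eta}\phi_m(z)$ is uniformly bounded over all $m$ and $z$. Write $\tilde p=p(1-2\eta)$. The maximum information gain is $\Gamma_{k,\lambda}(t)=\max_{Z^t\subset\mathcal{Z},|Z^t|=t}\frac12\log\det(I+\lambda^{-2}K_{Z^t})$, where $K_{Z^t}=[k(z,z')]_{z,z'\in Z^t}$. *)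

theory Defs
  imports "HOL-Analysis.Analysis" "Jordan_Normal_Form.Determinant"
begin

definition hypercube :: "'a::euclidean_space \<Rightarrow> real \<Rightarrow> 'a set" where
  "hypercube a \<rho> = cbox a (a + \<rho> *\<^sub>R One)"

definition pd_kernel_on :: "'a set \<Rightarrow> ('a \<Rightarrow> 'a \<Rightarrow> real) \<Rightarrow> bool" where
  "pd_kernel_on Z k \<longleftrightarrow>
     (\<forall>z\<in>Z. \<forall>z'\<in>Z. k z z' = k z' z) \<and>
     (\<forall>zs c. set zs \<subseteq> Z \<longrightarrow>
        (\<Sum>i<length zs. \<Sum>j<length zs. c i * c j * k (zs ! i) (zs ! j)) \<ge> 0)"

definition mercer_pairs ::
  "'a::euclidean_space set \<Rightarrow> ('a \<Rightarrow> 'a \<Rightarrow> real) \<Rightarrow> (nat \<Rightarrow> real) \<Rightarrow> (nat \<Rightarrow> 'a \<Rightarrow> real) \<Rightarrow> bool" where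
  "mercer_pairs Z k \<sigma> \<phi> \<longleftrightarrow>
     (\<forall>m\<ge>1. 0 \<le> \<sigma> m) \<and>
     (\<forall>m n. 1 \<le> m \<longrightarrow> m \<le> n \<longrightarrow> \<sigma> n \<le> \<sigma> m) \<and>
     (\<forall>m\<ge>1. \<forall>n\<ge>1. (\<lambda>z. \<phi> m z * \<phi> n z) integrable_on Z \<and>
        integral Z (\<lambda>z. \<phi> m z * \<phi> n z) = (if m = n then 1 else 0)) \<and>
     (\<forall>m\<ge>1. \<forall>z\<in>Z. (\<lambda>z'. k z z' * \<phi> m z') integrable_on Z \<and>
        integral Z (\<lambda>z'. k z z' * \<phi> m z') = \<sigma> m * \<phi> m z) \<and>
     (\<forall>z\<in>Z. \<forall>z'\<in>Z. ((\<lambda>m. \<sigma> m * \<phi> m z * \<phi> m z') has_sum k z z') {1..})"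

definition gram_mat :: "('a \<Rightarrow> 'a \<Rightarrow> real) \<Rightarrow> 'a list \<Rightarrow> real mat" where
  "gram_mat k zs = mat (length zs) (length zs) (\<lambda>(i,j). k (zs ! i) (zs ! j))"

text \<open>Maximum information gain: maximum over subsets Z^t of Z with |Z^t| = t
  (represented by distinct lists of length t) of 1/2 log det(I + lambda^-2 K).\<close>
definition max_info_gain ::
  "'a set \<Rightarrow> ('a \<Rightarrow> 'a \<Rightarrow> real) \<Rightarrow> real \<Rightarrow> nat \<Rightarrow> real" where
  "max_info_gain Z k lam t =
     (SUP zs \<in> {zs. set zs \<subseteq> Z \<and> distinct zs \<and> length zs = t}.
        ln (Determinant.det (1\<^sub>m t + (1 / lam\<^sup>2) \<cdot>\<^sub>m gram_mat k zs)) / 2)"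

end

theory Submission
  imports Defs
begin


lemma inv_exists:
  fixes M :: "real mat"
  assumes M: "M \<in> carrier_mat n n" and d: "det M \<noteq> 0"
  shows "\<exists>Mi. Mi \<in> carrier_mat n n \<and> M * Mi = 1\<^sub>m n \<and> Mi * M = 1\<^sub>m n"
proof -
  let ?Mi = "(1 / det M) \<cdot>\<^sub>m adj_mat M"
  have A: "adj_mat M \<in> carrier_mat n n" using adj_mat(1)[OF M] .
  have "M * ?Mi = (1 / det M) \<cdot>\<^sub>m (M * adj_mat M)" using mult_smult_distrib[OF M A] .
  also have "\<dots> = 1\<^sub>m n" using adj_mat(2)[OF M] d by (intro eq_matI) auto
  finally have 1: "M * ?Mi = 1\<^sub>m n" .
  have "?Mi * M = (1 / det M) \<cdot>\<^sub>m (adj_mat M * M)" using mult_smult_assoc_mat[OF A M] .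
  also have "\<dots> = 1\<^sub>m n" using adj_mat(3)[OF M] d by (intro eq_matI) auto
  finally have 2: "?Mi * M = 1\<^sub>m n" .
  show ?thesis using 1 2 A by (intro exI[of _ ?Mi]) auto
qed

lemma block_det:
  fixes M Mi U V :: "real mat"
  assumes M: "M \<in> carrier_mat n n" and Mi: "Mi \<in> carrier_mat n n" and MiM: "Mi * M = 1\<^sub>m n"
    and U: "U \<in> carrier_mat n 1" and V: "V \<in> carrier_mat 1 n"
  shows "det (M + U * V) = det M * (1 + (V * Mi * U) $$ (0,0))"
proof -
  let ?S = "1\<^sub>m 1 + V * Mi * U"
  have S: "?S \<in> carrier_mat 1 1" using U V Mi by auto
  have UV: "U * V \<in> carrier_mat n n" using U V by auto
  have VMi: "V * Mi \<in> carrier_mat 1 n" using V Mi by auto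
  have mU: "- U \<in> carrier_mat n 1" using U by auto
  let ?N = "four_block_mat M (- U) V (1\<^sub>m 1)"
  have e1: "?N = four_block_mat (1\<^sub>m n) (- U) (0\<^sub>m 1 n) (1\<^sub>m 1) * four_block_mat (M + U * V) (0\<^sub>m n 1) V (1\<^sub>m 1)"
  proof (subst mult_four_block_mat[OF one_carrier_mat mU zero_carrier_mat one_carrier_mat _ zero_carrier_mat V one_carrier_mat])
    show "M + U * V \<in> carrier_mat n n" using M UV by auto
    show "four_block_mat M (- U) V (1\<^sub>m 1) =
    four_block_mat (1\<^sub>m n * (M + U * V) + - U * V) (1\<^sub>m n * 0\<^sub>m n 1 + - U * 1\<^sub>m 1)
     (0\<^sub>m 1 n * (M + U * V) + 1\<^sub>m 1 * V) (0\<^sub>m 1 n * 0\<^sub>m n 1 + 1\<^sub>m 1 * 1\<^sub>m 1)"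
    proof (rule cong_four_block_mat)
      show "M = 1\<^sub>m n * (M + U * V) + - U * V"
        using M U V by (intro eq_matI) (auto simp: scalar_prod_def)
    qed (use M U V in auto)
  qed
  have e2: "?N = four_block_mat (1\<^sub>m n) (0\<^sub>m n 1) (V * Mi) (1\<^sub>m 1) * four_block_mat M (- U) (0\<^sub>m 1 n) ?S"
  proof (subst mult_four_block_mat[OF one_carrier_mat zero_carrier_mat VMi one_carrier_mat M mU zero_carrier_mat S])
    show "four_block_mat M (- U) V (1\<^sub>m 1) =
    four_block_mat (1\<^sub>m n * M + 0\<^sub>m n 1 * 0\<^sub>m 1 n) (1\<^sub>m n * - U + 0\<^sub>m n 1 * ?S)
     (V * Mi * M + 1\<^sub>m 1 * 0\<^sub>m 1 n) (V * Mi * - U + 1\<^sub>m 1 * ?S)"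
    proof (rule cong_four_block_mat)
      have "V * Mi * M = V" using V Mi M MiM by (simp add: assoc_mult_mat[OF V Mi M])
      then show "V = V * Mi * M + 1\<^sub>m 1 * 0\<^sub>m 1 n" using V by simp
      show "1\<^sub>m 1 = V * Mi * - U + 1\<^sub>m 1 * ?S"
        using V Mi U by (intro eq_matI) (auto simp: scalar_prod_def)
    qed (use M U V in auto)
  qed
  have MUV: "M + U * V \<in> carrier_mat n n" using M UV by auto
  have c1: "four_block_mat (1\<^sub>m n) (- U) (0\<^sub>m 1 n) (1\<^sub>m 1) \<in> carrier_mat (n+1) (n+1)"
    using four_block_carrier_mat[OF one_carrier_mat one_carrier_mat] by blast
  have c2: "four_block_mat (M + U * V) (0\<^sub>m n 1) V (1\<^sub>m 1) \<in> carrier_mat (n+1) (n+1)"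
    using four_block_carrier_mat[OF MUV one_carrier_mat] by blast
  have c3: "four_block_mat (1\<^sub>m n) (0\<^sub>m n 1) (V * Mi) (1\<^sub>m 1) \<in> carrier_mat (n+1) (n+1)"
    using four_block_carrier_mat[OF one_carrier_mat one_carrier_mat] by blast
  have c4: "four_block_mat M (- U) (0\<^sub>m 1 n) ?S \<in> carrier_mat (n+1) (n+1)"
    using four_block_carrier_mat[OF M S] by blast
  have "det ?N = det (M + U * V)"
    unfolding e1 det_mult[OF c1 c2]
    det_four_block_mat_lower_left_zero[OF one_carrier_mat mU refl one_carrier_mat]
    det_four_block_mat_upper_right_zero[OF MUV refl V one_carrier_mat] by simp
  moreover have "det ?N = det M * det ?S"
    unfolding e2 det_mult[OF c3 c4]
    det_four_block_mat_lower_left_zero[OF M mU refl S]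
    det_four_block_mat_upper_right_zero[OF one_carrier_mat refl VMi one_carrier_mat] by simp
  moreover have "det ?S = 1 + (V * Mi * U) $$ (0,0)"
    using det_single[OF S] V Mi U by simp
  ultimately show ?thesis by simp
qed

lemma rank_one:
  fixes p :: "nat \<Rightarrow> nat \<Rightarrow> real" and u :: "nat \<Rightarrow> real" and c :: real
  assumes psd: "\<And>x. (\<Sum>i<n. x i * (\<Sum>j<n. p i j * x j)) \<ge> 0"
    and c: "c \<ge> 0"
    and dpos: "det (mat n n (\<lambda>(i,j). (if i = j then 1 else 0) + p i j)) > 0"
  shows "det (mat n n (\<lambda>(i,j). (if i = j then 1 else 0) + p i j))
           \<le> det (mat n n (\<lambda>(i,j). (if i = j then 1 else 0) + p i j + c * u i * u j))"
    and "det (mat n n (\<lambda>(i,j). (if i = j then 1 else 0) + p i j + c * u i * u j))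
           \<le> det (mat n n (\<lambda>(i,j). (if i = j then 1 else 0) + p i j)) * (1 + c * (\<Sum>i<n. (u i)\<^sup>2))"
proof -
  define M where "M = mat n n (\<lambda>(i,j). (if i = j then 1 else (0::real)) + p i j)"
  have M: "M \<in> carrier_mat n n" unfolding M_def by auto
  obtain Mi where Mi: "Mi \<in> carrier_mat n n" and MMi: "M * Mi = 1\<^sub>m n" and MiM: "Mi * M = 1\<^sub>m n"
    using inv_exists[OF M] dpos unfolding M_def by auto
  define U where "U = mat n 1 (\<lambda>(i,_). c * u i)"
  define V where "V = mat 1 n (\<lambda>(_,j). u j)"
  have U: "U \<in> carrier_mat n 1" and V: "V \<in> carrier_mat 1 n" unfolding U_def V_def by auto
  have eqM': "M + U * V = mat n n (\<lambda>(i,j). (if i = j then 1 else 0) + p i j + c * u i * u j)"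
    unfolding M_def U_def V_def by (intro eq_matI) (auto simp: scalar_prod_def)
  define w where "w k = (\<Sum>j<n. Mi $$ (k,j) * u j)" for k
  define s where "s = (\<Sum>k<n. u k * w k)"
  have q: "(V * Mi * U) $$ (0,0) = c * s"
    using Mi unfolding U_def V_def s_def w_def
    by (simp add: scalar_prod_def atLeast0LessThan sum_distrib_left sum_distrib_right mult_ac)
       (subst sum.swap, simp add: mult_ac)
  have Mw: "(\<Sum>k<n. M $$ (i,k) * w k) = u i" if i: "i < n" for i
  proof -
    have "(\<Sum>k<n. M $$ (i,k) * w k) = (\<Sum>j<n. (\<Sum>k<n. M $$ (i,k) * Mi $$ (k,j)) * u j)"
      unfolding w_def by (simp add: sum_distrib_left sum_distrib_right mult_ac) (subst sum.swap, simp)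
    also have "\<dots> = (\<Sum>j<n. (if i = j then 1 else 0) * u j)"
    proof (rule sum.cong[OF refl])
      fix j assume j: "j \<in> {..<n}"
      have "(M * Mi) $$ (i,j) = (\<Sum>k<n. M $$ (i,k) * Mi $$ (k,j))"
        using M Mi i j by (simp add: scalar_prod_def atLeast0LessThan)
      then show "(\<Sum>k<n. M $$ (i,k) * Mi $$ (k,j)) * u j = (if i = j then 1 else 0) * u j"
        using MMi i j by simp
    qed
    also have "\<dots> = (\<Sum>j<n. if j = i then u j else 0)" by (intro sum.cong) auto
    also have "\<dots> = u i" using i by simp
    finally show ?thesis .
  qed
  define r where "r i = (\<Sum>k<n. p i k * w k)" for i
  have uwr: "u i = w i + r i" if "i < n" for i
  proof -
    have "(\<Sum>k<n. M $$ (i,k) * w k) = (\<Sum>k<n. (if k = i then w k else 0) + p i k * w k)"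
      using that unfolding M_def by (intro sum.cong) (auto simp: algebra_simps)
    also have "\<dots> = w i + r i" using that unfolding r_def by (simp add: sum.distrib)
    finally show ?thesis using Mw[OF that] by simp
  qed
  have pos: "(\<Sum>i<n. w i * r i) \<ge> 0" using psd[of w] unfolding r_def .
  have s_eq: "s = (\<Sum>i<n. (w i)\<^sup>2) + (\<Sum>i<n. w i * r i)"
    unfolding s_def using uwr by (simp add: sum.distrib[symmetric] power2_eq_square algebra_simps)
  have u_eq: "(\<Sum>i<n. (u i)\<^sup>2) = (\<Sum>i<n. (w i)\<^sup>2) + 2 * (\<Sum>i<n. w i * r i) + (\<Sum>i<n. (r i)\<^sup>2)"
    using uwr by (simp add: sum.distrib[symmetric] sum_distrib_left power2_eq_square algebra_simps)
  have s0: "s \<ge> 0" using s_eq pos by (simp add: sum_nonneg)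
  have s1: "s \<le> (\<Sum>i<n. (u i)\<^sup>2)" using s_eq u_eq pos by (simp add: sum_nonneg)
  have key: "det (M + U * V) = det M * (1 + c * s)"
    using block_det[OF M Mi MiM U V] q by simp
  have dM: "det M > 0" using dpos unfolding M_def .
  show "det (mat n n (\<lambda>(i,j). (if i = j then 1 else 0) + p i j))
           \<le> det (mat n n (\<lambda>(i,j). (if i = j then 1 else 0) + p i j + c * u i * u j))"
    using key dM c s0 unfolding eqM' M_def[symmetric] by (simp add: mult_nonneg_nonneg)
  show "det (mat n n (\<lambda>(i,j). (if i = j then 1 else 0) + p i j + c * u i * u j))
           \<le> det (mat n n (\<lambda>(i,j). (if i = j then 1 else 0) + p i j)) * (1 + c * (\<Sum>i<n. (u i)\<^sup>2))"
    using key dM c s1 unfolding eqM' M_def[symmetric] by (simp add: mult_left_mono)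
qed


lemma psd_sum:
  fixes g :: "nat \<Rightarrow> nat \<Rightarrow> real" and c :: "nat \<Rightarrow> real"
  assumes c: "\<And>m. m \<in> F \<Longrightarrow> c m \<ge> 0"
  shows "(\<Sum>i<n. x i * (\<Sum>j<n. (\<Sum>m\<in>F. c m * g m i * g m j) * x j)) \<ge> 0"
proof -
  have "(\<Sum>i<n. x i * (\<Sum>j<n. (\<Sum>m\<in>F. c m * g m i * g m j) * x j))
      = (\<Sum>m\<in>F. c m * (\<Sum>i<n. x i * g m i)\<^sup>2)"
    by (simp add: power2_eq_square sum_distrib_left sum_distrib_right mult_ac)
       (subst sum.swap, rule sum.cong[OF refl], subst sum.swap, simp add: mult_ac)
  also have "\<dots> \<ge> 0" using c by (intro sum_nonneg) auto
  finally show ?thesis .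
qed

lemma prod_bound:
  fixes g :: "nat \<Rightarrow> nat \<Rightarrow> real" and c :: "nat \<Rightarrow> real"
  assumes c: "\<And>m. c m \<ge> 0" and fin: "finite S"
  shows "1 \<le> det (mat n n (\<lambda>(i,j). (if i = j then 1 else 0) + (\<Sum>m\<in>S. c m * g m i * g m j)))
     \<and> det (mat n n (\<lambda>(i,j). (if i = j then 1 else 0) + (\<Sum>m\<in>S. c m * g m i * g m j)))
        \<le> (\<Prod>m\<in>S. (1 + c m * (\<Sum>i<n. (g m i)\<^sup>2)))"
  using fin
proof (induction S rule: finite_induct)
  case empty
  have "mat n n (\<lambda>(i,j). (if i = j then 1 else 0) + (\<Sum>m\<in>{}. c m * g m i * g m j)) = 1\<^sub>m n"
    by (intro eq_matI) auto
  then show ?case by simp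
next
  case (insert a F)
  define p where "p i j = (\<Sum>m\<in>F. c m * g m i * g m j)" for i j
  have eq: "mat n n (\<lambda>(i,j). (if i = j then 1 else 0) + (\<Sum>m\<in>insert a F. c m * g m i * g m j))
     = mat n n (\<lambda>(i,j). (if i = j then 1 else 0) + p i j + c a * g a i * g a j)"
    using insert(1,2) unfolding p_def by (intro eq_matI) auto
  have psd: "\<And>x. (\<Sum>i<n. x i * (\<Sum>j<n. p i j * x j)) \<ge> 0"
    unfolding p_def using c by (intro psd_sum) auto
  have IH: "1 \<le> det (mat n n (\<lambda>(i,j). (if i = j then 1 else 0) + p i j))"
    "det (mat n n (\<lambda>(i,j). (if i = j then 1 else 0) + p i j)) \<le> (\<Prod>m\<in>F. (1 + c m * (\<Sum>i<n. (g m i)\<^sup>2)))"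
    using insert(3) unfolding p_def by auto
  have dpos: "det (mat n n (\<lambda>(i,j). (if i = j then 1 else 0) + p i j)) > 0" using IH(1) by simp
  note r = rank_one[where p=p and c="c a" and u="g a", OF psd c dpos]
  have f0: "0 \<le> 1 + c a * (\<Sum>i<n. (g a i)\<^sup>2)" using c[of a] by (simp add: sum_nonneg)
  show ?case
    unfolding eq prod.insert[OF insert(1,2)]
  proof
    show "1 \<le> det (mat n n (\<lambda>(i,j). (if i = j then 1 else 0) + p i j + c a * g a i * g a j))"
      using r(1) IH(1) by simp
    have "det (mat n n (\<lambda>(i,j). (if i = j then 1 else 0) + p i j + c a * g a i * g a j))
       \<le> det (mat n n (\<lambda>(i,j). (if i = j then 1 else 0) + p i j)) * (1 + c a * (\<Sum>i<n. (g a i)\<^sup>2))"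
      using r(2) .
    also have "\<dots> \<le> (\<Prod>m\<in>F. (1 + c m * (\<Sum>i<n. (g m i)\<^sup>2))) * (1 + c a * (\<Sum>i<n. (g a i)\<^sup>2))"
      using IH(2) f0 by (rule mult_right_mono)
    finally show "det (mat n n (\<lambda>(i,j). (if i = j then 1 else 0) + p i j + c a * g a i * g a j))
       \<le> (1 + c a * (\<Sum>i<n. (g a i)\<^sup>2)) * (\<Prod>m\<in>F. (1 + c m * (\<Sum>i<n. (g m i)\<^sup>2)))"
      by (simp add: mult.commute)
  qed
qed



lemma step_ineq:
  fixes x s :: real
  assumes x: "x \<ge> 1" and s: "s > 1"
  shows "(s - 1) * (x + 1) powr (- s) \<le> x powr (1 - s) - (x + 1) powr (1 - s)"
proof -
  have "\<exists>z. x < z \<and> z < x + 1 \<and> (x + 1) powr (1 - s) - x powr (1 - s) = (x + 1 - x) * ((1 - s) * z powr (1 - s - 1))"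
  proof (rule MVT2)
    fix y assume "x \<le> y" "y \<le> x + 1"
    then have "y > 0" using x by simp
    then show "((\<lambda>a. a powr (1 - s)) has_real_derivative (1 - s) * y powr (1 - s - 1)) (at y)"
      by (rule has_real_derivative_powr)
  qed simp
  then obtain z where z: "x < z" "z < x + 1"
    and eq: "(x + 1) powr (1 - s) - x powr (1 - s) = (1 - s) * z powr (- s)" by auto
  have "(x + 1) powr (- s) \<le> z powr (- s)"
    using z x s by (intro powr_mono2') auto
  then have "(s - 1) * (x + 1) powr (- s) \<le> (s - 1) * z powr (- s)"
    using s by (intro mult_left_mono) auto
  also have "\<dots> = x powr (1 - s) - (x + 1) powr (1 - s)" using eq by (simp add: algebra_simps)
  finally show ?thesis .
qed

lemma tail_sum:
  fixes s :: real and D :: nat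
  assumes s: "s > 1" and D: "D \<ge> 1"
  shows "(\<Sum>m\<in>{D<..n}. real m powr (- s)) \<le> real D powr (1 - s) / (s - 1)"
proof (cases "n \<le> D")
  case True
  then have "{D<..n} = {}" by auto
  then show ?thesis using s by simp
next
  case False
  then have nD: "D \<le> n" by simp
  have "(s - 1) * (\<Sum>m\<in>{D<..n}. real m powr (- s)) \<le> real D powr (1 - s) - real n powr (1 - s)"
    using nD
  proof (induction n rule: dec_induct)
    case base then show ?case by simp
  next
    case (step n)
    have eq: "{D<..Suc n} = insert (Suc n) {D<..n}" using step(1) by auto
    have "(s - 1) * (\<Sum>m\<in>{D<..Suc n}. real m powr (- s))
       = (s - 1) * (\<Sum>m\<in>{D<..n}. real m powr (- s)) + (s - 1) * real (Suc n) powr (- s)"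
      unfolding eq by (simp add: algebra_simps)
    also have "\<dots> \<le> (real D powr (1 - s) - real n powr (1 - s)) + (real n powr (1 - s) - real (Suc n) powr (1 - s))"
      using step(3) step_ineq[of "real n" s] s step(1) D by (intro add_mono) (auto simp: add.commute)
    finally show ?case by simp
  qed
  moreover have "real n powr (1 - s) \<ge> 0" by simp
  ultimately have "(s - 1) * (\<Sum>m\<in>{D<..n}. real m powr (- s)) \<le> real D powr (1 - s)" by linarith
  then show ?thesis using s by (simp add: field_simps)
qed

lemma tail_sum0:
  fixes s :: real
  assumes s: "s > 1"
  shows "(\<Sum>m\<in>{0<..n}. real m powr (- s)) \<le> s / (s - 1)"
proof (cases "n = 0")
  case True then show ?thesis using s by simp
next
  case False
  have eq: "{0<..n} = insert 1 {1<..n}" using False by auto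
  have "(\<Sum>m\<in>{0<..n}. real m powr (- s)) = 1 + (\<Sum>m\<in>{1<..n}. real m powr (- s))"
    unfolding eq by simp
  also have "\<dots> \<le> 1 + 1 / (s - 1)" using tail_sum[OF s, of 1 n] by simp
  also have "\<dots> = s / (s - 1)" using s by (simp add: field_simps)
  finally show ?thesis .
qed


lemma log_sum_bound:
  fixes a :: "nat \<Rightarrow> real" and s A Bt :: real and D N :: nat
  assumes s: "s > 1" and a0: "\<And>m. m \<ge> 1 \<Longrightarrow> 0 \<le> a m" and aA: "\<And>m. m \<ge> 1 \<Longrightarrow> a m \<le> A"
    and aB: "\<And>m. m \<ge> 1 \<Longrightarrow> a m \<le> Bt * real m powr (- s)" and Bt: "Bt \<ge> 0" and A: "A \<ge> 0"
  shows "(\<Sum>m\<in>{1..N}. ln (1 + a m))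
     \<le> real D * ln (1 + A) + Bt * (if D = 0 then s / (s - 1) else real D powr (1 - s) / (s - 1))"
proof -
  have split: "{1..N} = ({1..N} \<inter> {..D}) \<union> {D<..N}" by auto
  have disj: "({1..N} \<inter> {..D}) \<inter> {D<..N} = {}" by auto
  have "(\<Sum>m\<in>{1..N}. ln (1 + a m)) = (\<Sum>m\<in>{1..N} \<inter> {..D}. ln (1 + a m)) + (\<Sum>m\<in>{D<..N}. ln (1 + a m))"
    by (subst split, rule sum.union_disjoint) auto
  also have "(\<Sum>m\<in>{1..N} \<inter> {..D}. ln (1 + a m)) \<le> (\<Sum>m\<in>{1..N} \<inter> {..D}. ln (1 + A))"
  proof (intro sum_mono)
    fix m assume "m \<in> {1..N} \<inter> {..D}"
    then have m: "m \<ge> 1" by auto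
    show "ln (1 + a m) \<le> ln (1 + A)" using a0[OF m] aA[OF m] by simp
  qed
  also have "\<dots> = real (card ({1..N} \<inter> {..D})) * ln (1 + A)" by simp
  also have "\<dots> \<le> real D * ln (1 + A)"
  proof (rule mult_right_mono)
    have "{1..N} \<inter> {..D} \<subseteq> {1..D}" by auto
    then have "card ({1..N} \<inter> {..D}) \<le> card {1..D}" by (intro card_mono) auto
    then show "real (card ({1..N} \<inter> {..D})) \<le> real D" by simp
    show "0 \<le> ln (1 + A)" using A by simp
  qed
  also have "(\<Sum>m\<in>{D<..N}. ln (1 + a m)) \<le> (\<Sum>m\<in>{D<..N}. Bt * real m powr (- s))"
  proof (intro sum_mono)
    fix m assume "m \<in> {D<..N}"
    then have m: "m \<ge> 1" by auto
    have "ln (1 + a m) \<le> a m" using a0[OF m] by (intro ln_add_one_self_le_self) 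
    also have "\<dots> \<le> Bt * real m powr (- s)" using aB[OF m] .
    finally show "ln (1 + a m) \<le> Bt * real m powr (- s)" .
  qed
  also have "\<dots> = Bt * (\<Sum>m\<in>{D<..N}. real m powr (- s))" by (simp add: sum_distrib_left)
  also have "\<dots> \<le> Bt * (if D = 0 then s / (s - 1) else real D powr (1 - s) / (s - 1))"
  proof (rule mult_left_mono[OF _ Bt])
    show "(\<Sum>m\<in>{D<..N}. real m powr (- s)) \<le> (if D = 0 then s / (s - 1) else real D powr (1 - s) / (s - 1))"
      using tail_sum0[OF s, of N] tail_sum[OF s, of D N] by (cases "D = 0") auto
  qed
  finally show ?thesis by simp
qed

lemma choose_D:
  fixes s L B T lnA K :: real
  assumes s: "s > 1" and L: "L \<ge> 1" and B: "B \<ge> 0" and T: "T \<ge> 0" and lnA: "lnA \<le> K * L"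
    and K: "K \<ge> 0" and lnA0: "lnA \<ge> 0"
  shows "\<exists>D::nat. real D * lnA + B * T * (if D = 0 then s / (s - 1) else real D powr (1 - s) / (s - 1))
     \<le> (2 * K + s / (s - 1)) * (L * (B * T / L) powr (1 / s))"
proof -
  define y where "y = B * T / L"
  have y0: "y \<ge> 0" unfolding y_def using B T L by simp
  define x where "x = y powr (1 / s)"
  have x0: "x \<ge> 0" unfolding x_def by simp
  have xs: "x powr s = y" unfolding x_def using y0 s by (simp add: powr_powr)
  have BT: "B * T = L * x powr s" unfolding xs y_def using L by simp
  have s1: "s / (s - 1) \<ge> 0" using s by simp
  show ?thesis
  proof (cases "x < 1")
    case True
    have "x powr s \<le> x powr 1"
    proof (cases "x = 0")
      case False
      then show ?thesis using True x0 s by (intro powr_mono') auto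
    qed simp
    then have "x powr s \<le> x" using x0 by (cases "x = 0") auto
    then have "B * T \<le> L * x" unfolding BT using L by (intro mult_left_mono) auto
    then have "B * T * (s / (s - 1)) \<le> L * x * (s / (s - 1))" using s1 by (rule mult_right_mono)
    also have "\<dots> \<le> (2 * K + s / (s - 1)) * (L * x)"
      using K L x0 by (simp add: algebra_simps mult_nonneg_nonneg)
    finally show ?thesis unfolding x_def y_def by (intro exI[of _ 0]) simp
  next
    case False
    then have x1: "x \<ge> 1" by simp
    define D where "D = nat (ceiling x)"
    have rD: "real D = of_int (ceiling x)" unfolding D_def using x1 by simp
    have Dx: "real D \<ge> x" unfolding rD by simp
    have Dx2: "real D \<le> x + 1" unfolding rD using ceiling_correct[of x] by linarith
    have D0: "D \<noteq> 0" using Dx x1 by auto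
    have "real D powr (1 - s) \<le> x powr (1 - s)"
      using Dx x1 s by (intro powr_mono2') auto
    then have "B * T * (real D powr (1 - s) / (s - 1)) \<le> B * T * (x powr (1 - s) / (s - 1))"
      using B T s by (intro mult_left_mono divide_right_mono) auto
    also have "\<dots> = L * (x powr s * x powr (1 - s)) / (s - 1)" unfolding BT by simp
    also have "x powr s * x powr (1 - s) = x" using x1 by (simp add: powr_add[symmetric])
    finally have t2: "B * T * (real D powr (1 - s) / (s - 1)) \<le> L * x / (s - 1)" by simp
    have "real D * lnA \<le> (2 * x) * (K * L)"
      using Dx2 x1 lnA lnA0 by (intro mult_mono) auto
    then have "real D * lnA + B * T * (real D powr (1 - s) / (s - 1)) \<le> 2 * K * (L * x) + L * x / (s - 1)"
      using t2 by (simp add: algebra_simps)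
    also have "\<dots> \<le> (2 * K + s / (s - 1)) * (L * x)"
    proof -
      have "1 / (s - 1) \<le> s / (s - 1)" using s by (intro divide_right_mono) auto
      then have "1 / (s - 1) * (L * x) \<le> s / (s - 1) * (L * x)"
        using L x1 by (intro mult_right_mono) auto
      then have "L * x / (s - 1) \<le> s / (s - 1) * (L * x)" by simp
      then show ?thesis by (simp add: algebra_simps)
    qed
    finally show ?thesis unfolding x_def y_def using D0 by (intro exI[of _ D]) simp
  qed
qed



lemma hypercube_infinite:
  fixes a :: "'a::euclidean_space"
  assumes "\<rho> > 0"
  shows "infinite (hypercube a \<rho>)"
proof
  assume "finite (hypercube a \<rho>)"
  then have "interior (hypercube a \<rho>) = {}" by (rule empty_interior_finite)
  then have "box a (a + \<rho> *\<^sub>R One) = {}" unfolding hypercube_def by simp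
  moreover have "box a (a + \<rho> *\<^sub>R One) \<noteq> {}"
    using assms by (subst box_ne_empty) (auto simp: inner_add_left)
  ultimately show False by simp
qed

lemma exists_list:
  assumes "infinite Z"
  shows "\<exists>zs. set zs \<subseteq> Z \<and> distinct zs \<and> length zs = T"
proof -
  obtain B where B: "B \<subseteq> Z" "finite B" "card B = T" using infinite_arbitrarily_large[OF assms] by blast
  obtain xs where xs: "set xs = B" "distinct xs" using finite_distinct_list[OF B(2)] by blast
  show ?thesis using B xs distinct_card[OF xs(2)] by (intro exI[of _ xs]) auto
qed

lemma has_sum_term_le:
  fixes f :: "nat \<Rightarrow> real"
  assumes "(f has_sum S) A" "\<And>m. m \<in> A \<Longrightarrow> f m \<ge> 0" "x \<in> A"
  shows "f x \<le> S"
proof -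
  have h: "(f has_sum sum f {x}) {x}" by (rule has_sum_finite) simp
  have "sum f {x} \<le> S"
    by (rule has_sum_mono_neutral[OF h assms(1)]) (use assms in auto)
  then show ?thesis by simp
qed

lemma has_sum_partial:
  fixes f :: "nat \<Rightarrow> real"
  assumes "(f has_sum S) {1..}"
  shows "(\<lambda>N. \<Sum>m\<in>{1..N}. f m) \<longlonglongrightarrow> S"
proof -
  define h where "h m = (if m \<ge> 1 then f m else 0)" for m
  have "(h has_sum S) UNIV"
    using assms by (subst has_sum_cong_neutral[where f = h and T = "{1..}"]) (auto simp: h_def)
  then have "h sums S" by (rule has_sum_imp_sums)
  then have "(\<lambda>N. \<Sum>m\<le>N. h m) \<longlonglongrightarrow> S" by (simp add: sums_def_le)
  moreover have "(\<Sum>m\<le>N. h m) = (\<Sum>m\<in>{1..N}. f m)" for N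
  proof -
    have "(\<Sum>m\<le>N. h m) = (\<Sum>m\<in>{1..N}. h m)"
      by (rule sum.mono_neutral_right) (auto simp: h_def)
    also have "\<dots> = (\<Sum>m\<in>{1..N}. f m)" by (rule sum.cong) (auto simp: h_def)
    finally show ?thesis .
  qed
  ultimately show ?thesis by simp
qed

lemma det_tendsto:
  fixes A :: "nat \<Rightarrow> nat \<Rightarrow> nat \<Rightarrow> real"
  assumes "\<And>i j. i < n \<Longrightarrow> j < n \<Longrightarrow> (\<lambda>N. A N i j) \<longlonglongrightarrow> G i j"
  shows "(\<lambda>N. det (mat n n (\<lambda>(i,j). A N i j))) \<longlonglongrightarrow> det (mat n n (\<lambda>(i,j). G i j))"
proof -
  have eq: "det (mat n n (\<lambda>(i,j). F i j)) = (\<Sum>p\<in>{p. p permutes {0..<n}}. signof p * (\<Prod>i=0..<n. F i (p i)))"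
    for F :: "nat \<Rightarrow> nat \<Rightarrow> real"
  proof -
    have "det (mat n n (\<lambda>(i,j). F i j)) = (\<Sum>p\<in>{p. p permutes {0..<n}}. signof p * (\<Prod>i=0..<n. mat n n (\<lambda>(i,j). F i j) $$ (i, p i)))"
      by (rule det_def') simp
    also have "\<dots> = (\<Sum>p\<in>{p. p permutes {0..<n}}. signof p * (\<Prod>i=0..<n. F i (p i)))"
    proof (intro sum.cong refl arg_cong2[where f = "(*)"] prod.cong)
      fix p i assume p: "p \<in> {p. p permutes {0..<n}}" and i: "i \<in> {0..<n}"
      have "p i < n" using p i by (auto dest: permutes_in_image)
      then show "mat n n (\<lambda>(i,j). F i j) $$ (i, p i) = F i (p i)" using i by simp
    qed
    finally show ?thesis .
  qed
  show ?thesis unfolding eq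
  proof (intro tendsto_intros)
    fix p i assume p: "p \<in> {p. p permutes {0..<n}}" and i: "i \<in> {0..<n}"
    have "p i < n" using p i by (auto dest: permutes_in_image)
    then show "(\<lambda>N. A N i (p i)) \<longlonglongrightarrow> G i (p i)" using i assms by simp
  qed
qed



lemma list_bound:
  fixes zs :: "'a list" and Z :: "'a set" and k :: "'a \<Rightarrow> 'a \<Rightarrow> real"
    and \<sigma> :: "nat \<Rightarrow> real" and \<phi> :: "nat \<Rightarrow> 'a \<Rightarrow> real" and lam s Bc :: real and D :: nat
  assumes zs: "set zs \<subseteq> Z" and lam: "lam > 0" and kd: "\<forall>z\<in>Z. k z z \<le> 1"
    and \<sigma>0: "\<forall>m\<ge>1. 0 \<le> \<sigma> m"
    and mer: "\<forall>z\<in>Z. \<forall>z'\<in>Z. ((\<lambda>m. \<sigma> m * \<phi> m z * \<phi> m z') has_sum k z z') {1..}"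
    and sb: "\<forall>m\<ge>1. \<forall>z\<in>Z. \<sigma> m * (\<phi> m z)\<^sup>2 \<le> Bc * real m powr (- s)"
    and Bc: "Bc \<ge> 0" and s: "s > 1"
  shows "ln (det (1\<^sub>m (length zs) + (1 / lam\<^sup>2) \<cdot>\<^sub>m gram_mat k zs))
     \<le> real D * ln (1 + real (length zs) / lam\<^sup>2)
        + (Bc * real (length zs) / lam\<^sup>2) * (if D = 0 then s / (s - 1) else real D powr (1 - s) / (s - 1))"
    (is "_ \<le> ?R")
proof -
  define T where "T = length zs"
  define c where "c m = (if m \<ge> 1 then \<sigma> m / lam\<^sup>2 else 0)" for m
  define g where "g m i = \<phi> m (zs ! i)" for m i
  define a where "a m = c m * (\<Sum>i<T. (g m i)\<^sup>2)" for m
  have zsi: "zs ! i \<in> Z" if "i < T" for i using zs that unfolding T_def by auto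
  have c0: "c m \<ge> 0" for m using \<sigma>0 unfolding c_def by auto
  have l2: "lam\<^sup>2 > 0" using lam by simp
  have a_eq: "a m = (\<Sum>i<T. \<sigma> m * (\<phi> m (zs ! i))\<^sup>2) / lam\<^sup>2" if "m \<ge> 1" for m
    unfolding a_def c_def g_def using that by (simp add: sum_distrib_left sum_divide_distrib)
  have a0: "0 \<le> a m" if "m \<ge> 1" for m
    unfolding a_def using c0 by (simp add: sum_nonneg)
  have aA: "a m \<le> real T / lam\<^sup>2" if m: "m \<ge> 1" for m
  proof -
    have "(\<Sum>i<T. \<sigma> m * (\<phi> m (zs ! i))\<^sup>2) \<le> (\<Sum>i<T. 1)"
    proof (rule sum_mono)
      fix i assume "i \<in> {..<T}"
      then have z: "zs ! i \<in> Z" using zsi by auto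
      have hs: "((\<lambda>m. \<sigma> m * \<phi> m (zs ! i) * \<phi> m (zs ! i)) has_sum k (zs ! i) (zs ! i)) {1..}"
        using mer z by blast
      have nn: "0 \<le> \<sigma> m' * \<phi> m' (zs ! i) * \<phi> m' (zs ! i)" if "m' \<in> {1..}" for m'
      proof -
        have "0 \<le> \<sigma> m'" using \<sigma>0 that by auto
        then have "0 \<le> \<sigma> m' * (\<phi> m' (zs ! i) * \<phi> m' (zs ! i))" by (rule mult_nonneg_nonneg[OF _ zero_le_square])
        then show ?thesis by (simp add: mult.assoc)
      qed
      have "\<sigma> m * \<phi> m (zs ! i) * \<phi> m (zs ! i) \<le> k (zs ! i) (zs ! i)"
        by (rule has_sum_term_le[OF hs nn]) (use m in auto)
      then show "\<sigma> m * (\<phi> m (zs ! i))\<^sup>2 \<le> 1" using kd z by (simp add: power2_eq_square mult.assoc) (meson order_trans)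
    qed
    then show ?thesis unfolding a_eq[OF m] using l2 by (simp add: divide_right_mono)
  qed
  have aB: "a m \<le> (Bc * real T / lam\<^sup>2) * real m powr (- s)" if m: "m \<ge> 1" for m
  proof -
    have "(\<Sum>i<T. \<sigma> m * (\<phi> m (zs ! i))\<^sup>2) \<le> (\<Sum>i<T. Bc * real m powr (- s))"
      using sb m zsi by (intro sum_mono) auto
    then show ?thesis unfolding a_eq[OF m] using l2 by (simp add: divide_right_mono mult_ac)
  qed
  have A0: "real T / lam\<^sup>2 \<ge> 0" by simp
  have Bt0: "Bc * real T / lam\<^sup>2 \<ge> 0" using Bc by simp
  define AN where "AN N i j = (if i = j then 1 else 0) + (\<Sum>m\<in>{1..N}. c m * g m i * g m j)" for N i j
  have bound: "1 \<le> det (mat T T (\<lambda>(i,j). AN N i j)) \<and> det (mat T T (\<lambda>(i,j). AN N i j)) \<le> exp ?R" for N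
  proof -
    note pb = prod_bound[where S="{1..N}" and n=T and g=g and c=c, OF c0]
    have "(\<Prod>m\<in>{1..N}. (1 + c m * (\<Sum>i<T. (g m i)\<^sup>2))) = exp (\<Sum>m\<in>{1..N}. ln (1 + a m))"
      unfolding a_def using c0 by (subst exp_sum) (auto intro!: prod.cong simp: sum_nonneg add_pos_nonneg)
    also have "\<dots> \<le> exp ?R"
      using log_sum_bound[OF s a0 aA aB Bt0 A0, of N D] unfolding T_def by simp
    finally show ?thesis using pb unfolding AN_def by auto
  qed
  define G where "G i j = (if i = j then 1 else 0) + k (zs ! i) (zs ! j) / lam\<^sup>2" for i j
  have lim: "(\<lambda>N. AN N i j) \<longlonglongrightarrow> G i j" if "i < T" "j < T" for i j
  proof -
    have hs: "((\<lambda>m. \<sigma> m * \<phi> m (zs ! i) * \<phi> m (zs ! j)) has_sum k (zs ! i) (zs ! j)) {1..}"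
      using mer zsi that by auto
    have "(\<lambda>N. (\<Sum>m\<in>{1..N}. \<sigma> m * \<phi> m (zs ! i) * \<phi> m (zs ! j))) \<longlonglongrightarrow> k (zs ! i) (zs ! j)"
      by (rule has_sum_partial[OF hs])
    then have "(\<lambda>N. (if i = j then 1 else 0) + (\<Sum>m\<in>{1..N}. \<sigma> m * \<phi> m (zs ! i) * \<phi> m (zs ! j)) / lam\<^sup>2) \<longlonglongrightarrow> G i j"
      unfolding G_def using lam by (intro tendsto_intros) auto
    moreover have "(\<Sum>m\<in>{1..N}. \<sigma> m * \<phi> m (zs ! i) * \<phi> m (zs ! j)) / lam\<^sup>2 = (\<Sum>m\<in>{1..N}. c m * g m i * g m j)" for N
      unfolding c_def g_def sum_divide_distrib by (intro sum.cong) auto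
    ultimately show ?thesis unfolding AN_def by simp
  qed
  have Geq: "1\<^sub>m (length zs) + (1 / lam\<^sup>2) \<cdot>\<^sub>m gram_mat k zs = mat T T (\<lambda>(i,j). G i j)"
    unfolding T_def G_def gram_mat_def by (intro eq_matI) auto
  have L: "(\<lambda>N. det (mat T T (\<lambda>(i,j). AN N i j))) \<longlonglongrightarrow> det (mat T T (\<lambda>(i,j). G i j))"
    by (rule det_tendsto) (use lim in auto)
  have up: "det (mat T T (\<lambda>(i,j). G i j)) \<le> exp ?R"
    by (rule LIMSEQ_le_const2[OF L]) (use bound in auto)
  have lo: "1 \<le> det (mat T T (\<lambda>(i,j). G i j))"
    by (rule LIMSEQ_le_const[OF L]) (use bound in auto)
  have "ln (det (mat T T (\<lambda>(i,j). G i j))) \<le> ln (exp ?R)"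
    using up lo by (subst ln_le_cancel_iff) auto
  then show ?thesis unfolding Geq by simp
qed



lemma rewrite_bound:
  fixes L T Bz \<rho> \<alpha> s :: real
  assumes L: "L > 0" and T: "T > 0" and Bz: "Bz \<ge> 0" and \<rho>: "\<rho> > 0" and s: "s > 0"
  shows "L * (Bz * \<rho> powr \<alpha> * T / L) powr (1 / s)
     = Bz powr (1 / s) * T powr (1 / s) * L powr (1 - 1 / s) * \<rho> powr (\<alpha> / s)"
proof -
  have "(Bz * \<rho> powr \<alpha> * T / L) powr (1 / s) = Bz powr (1 / s) * (\<rho> powr \<alpha>) powr (1 / s) * T powr (1 / s) / L powr (1 / s)"
    using L T Bz \<rho> by (simp add: powr_mult powr_divide)
  also have "(\<rho> powr \<alpha>) powr (1 / s) = \<rho> powr (\<alpha> / s)" by (simp add: powr_powr)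
  finally have e: "(Bz * \<rho> powr \<alpha> * T / L) powr (1 / s) = Bz powr (1 / s) * \<rho> powr (\<alpha> / s) * T powr (1 / s) / L powr (1 / s)" .
  have "L powr (1 - 1 / s) = L / L powr (1 / s)" using L by (simp add: powr_diff)
  then show ?thesis unfolding e by simp
qed

lemma sigma_phi_bound:
  fixes m :: nat and p \<eta> Cp C\<phi> \<rho> \<alpha> sig ph :: real
  assumes m: "m \<ge> 1" and sig0: "0 \<le> sig" and sig: "sig \<le> Cp * real m powr (- p) * \<rho> powr \<alpha>"
    and ph: "\<bar>real m powr (- p * \<eta>) * ph\<bar> \<le> C\<phi>"
  shows "sig * ph\<^sup>2 \<le> (Cp * C\<phi>\<^sup>2 * \<rho> powr \<alpha>) * real m powr (- (p * (1 - 2 * \<eta>)))"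
proof -
  define y where "y = real m powr (- p * \<eta>) * ph"
  have mpos: "real m > 0" using m by simp
  have phy: "ph = real m powr (p * \<eta>) * y"
    unfolding y_def using mpos by (simp add: powr_minus field_simps)
  have y2: "y\<^sup>2 \<le> C\<phi>\<^sup>2"
  proof -
    have "\<bar>y\<bar> \<le> C\<phi>" using ph unfolding y_def .
    then have "\<bar>y\<bar>\<^sup>2 \<le> C\<phi>\<^sup>2" by (intro power_mono) auto
    then show ?thesis by simp
  qed
  have ph2: "ph\<^sup>2 = real m powr (2 * p * \<eta>) * y\<^sup>2"
    unfolding phy using mpos by (simp add: power_mult_distrib powr_powr[symmetric] power2_eq_square powr_add[symmetric])
  have "sig * ph\<^sup>2 \<le> (Cp * real m powr (- p) * \<rho> powr \<alpha>) * (real m powr (2 * p * \<eta>) * C\<phi>\<^sup>2)"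
    unfolding ph2 using sig sig0 y2 by (intro mult_mono mult_left_mono) auto
  also have "\<dots> = (Cp * C\<phi>\<^sup>2 * \<rho> powr \<alpha>) * (real m powr (- p) * real m powr (2 * p * \<eta>))" by simp
  also have "real m powr (- p) * real m powr (2 * p * \<eta>) = real m powr (- (p * (1 - 2 * \<eta>)))"
    by (simp add: powr_add[symmetric] algebra_simps)
  finally show ?thesis .
qed



theorem lemma2:
  fixes Cp \<alpha> p \<eta> C\<phi> lam :: real
  assumes "Cp > 0" and "\<alpha> > 0" and "p > 1" and "\<eta> \<ge> 0" and "lam > 0"
    and "p * (1 - 2 * \<eta>) > 1"
  shows "\<exists>C T0. \<forall>(a::'a::euclidean_space) \<rho> k \<sigma> \<phi>.
      \<rho> > 0 \<longrightarrow>
      pd_kernel_on (hypercube a \<rho>) k \<longrightarrow>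
      continuous_on (hypercube a \<rho> \<times> hypercube a \<rho>) (\<lambda>(z, z'). k z z') \<longrightarrow>
      (\<forall>z\<in>hypercube a \<rho>. k z z \<le> 1) \<longrightarrow>
      mercer_pairs (hypercube a \<rho>) k \<sigma> \<phi> \<longrightarrow>
      (\<forall>m\<ge>1. \<sigma> m \<le> Cp * real m powr (- p) * \<rho> powr \<alpha>) \<longrightarrow>
      (\<forall>m\<ge>1. \<forall>z\<in>hypercube a \<rho>. \<bar>real m powr (- p * \<eta>) * \<phi> m z\<bar> \<le> C\<phi>) \<longrightarrow>
      (\<forall>T::nat. T \<ge> T0 \<longrightarrow>
         max_info_gain (hypercube a \<rho>) k lam T
           \<le> C * real T powr (1 / (p * (1 - 2 * \<eta>)))
               * ln (real T) powr (1 - 1 / (p * (1 - 2 * \<eta>)))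
               * \<rho> powr (\<alpha> / (p * (1 - 2 * \<eta>))))"
proof -
  define s where "s = p * (1 - 2 * \<eta>)"
  have s: "s > 1" using assms(6) unfolding s_def .
  have lam: "lam > 0" using assms(5) .
  define K where "K = 1 + ln (1 + 1 / lam\<^sup>2)"
  have K0: "K \<ge> 0" unfolding K_def by simp
  define B0 where "B0 = Cp * C\<phi>\<^sup>2 / lam\<^sup>2"
  have B00: "B0 \<ge> 0" unfolding B0_def using assms(1) by simp
  define C where "C = (2 * K + s / (s - 1)) * B0 powr (1 / s) / 2"
  show ?thesis unfolding s_def[symmetric]
  proof (intro exI[of _ C] exI[of _ "3::nat"] allI impI)
    fix a :: 'a and \<rho> k \<sigma> \<phi> and T :: nat
    assume \<rho>: "\<rho> > 0" and kd: "\<forall>z\<in>hypercube a \<rho>. k z z \<le> 1"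
      and mp: "mercer_pairs (hypercube a \<rho>) k \<sigma> \<phi>"
      and \<sigma>b: "\<forall>m\<ge>1. \<sigma> m \<le> Cp * real m powr (- p) * \<rho> powr \<alpha>"
      and \<phi>b: "\<forall>m\<ge>1. \<forall>z\<in>hypercube a \<rho>. \<bar>real m powr (- p * \<eta>) * \<phi> m z\<bar> \<le> C\<phi>"
      and T3: "3 \<le> T"
    define Z where "Z = hypercube a \<rho>"
    have \<sigma>0: "\<forall>m\<ge>1. 0 \<le> \<sigma> m" using mp unfolding mercer_pairs_def by auto
    have mer: "\<forall>z\<in>Z. \<forall>z'\<in>Z. ((\<lambda>m. \<sigma> m * \<phi> m z * \<phi> m z') has_sum k z z') {1..}"
      using mp unfolding mercer_pairs_def Z_def by auto
    define Bc where "Bc = Cp * C\<phi>\<^sup>2 * \<rho> powr \<alpha>"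
    have Bc0: "Bc \<ge> 0" unfolding Bc_def using assms(1) by simp
    have sb: "\<forall>m\<ge>1. \<forall>z\<in>Z. \<sigma> m * (\<phi> m z)\<^sup>2 \<le> Bc * real m powr (- s)"
      unfolding Bc_def s_def Z_def using \<sigma>0 \<sigma>b \<phi>b by (auto intro!: sigma_phi_bound)
    define L where "L = ln (real T)"
    have L1: "L \<ge> 1"
    proof -
      have "exp 1 \<le> (3::real)" using exp_le by simp
      also have "\<dots> \<le> real T" using T3 by simp
      finally have "exp 1 \<le> real T" .
      then show ?thesis unfolding L_def using ln_ge_iff[of "real T" 1] T3 by simp
    qed
    define lnA where "lnA = ln (1 + real T / lam\<^sup>2)"
    have lnA0: "lnA \<ge> 0" unfolding lnA_def by simp
    have lnA: "lnA \<le> K * L"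
    proof -
      have "1 + real T / lam\<^sup>2 \<le> real T * (1 + 1 / lam\<^sup>2)"
        using T3 lam by (simp add: field_simps)
      moreover have pos1: "0 < 1 + 1 / lam\<^sup>2" by (simp add: add_pos_nonneg)
      moreover have posT: "0 < real T * (1 + 1 / lam\<^sup>2)" using T3 pos1 by simp
      moreover have "0 < 1 + real T / lam\<^sup>2" by (simp add: add_pos_nonneg)
      ultimately have "lnA \<le> ln (real T * (1 + 1 / lam\<^sup>2))" unfolding lnA_def
        by (subst ln_le_cancel_iff) auto
      also have "\<dots> = L + ln (1 + 1 / lam\<^sup>2)" unfolding L_def using T3 pos1
        by (subst ln_mult) auto
      also have "\<dots> \<le> L + ln (1 + 1 / lam\<^sup>2) * L"
      proof -
        have "0 \<le> ln (1 + 1 / lam\<^sup>2)" by simp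
        then have "ln (1 + 1 / lam\<^sup>2) * 1 \<le> ln (1 + 1 / lam\<^sup>2) * L" using L1 by (intro mult_left_mono)
        then show ?thesis by simp
      qed
      finally show ?thesis unfolding K_def by (simp add: algebra_simps)
    qed
    obtain D :: nat where D: "real D * lnA + (Bc / lam\<^sup>2) * real T * (if D = 0 then s / (s - 1) else real D powr (1 - s) / (s - 1))
       \<le> (2 * K + s / (s - 1)) * (L * ((Bc / lam\<^sup>2) * real T / L) powr (1 / s))"
      using choose_D[OF s L1 _ _ lnA K0 lnA0, of "Bc / lam\<^sup>2" "real T"] Bc0 by auto
    have RW: "L * ((Bc / lam\<^sup>2) * real T / L) powr (1 / s)
       = B0 powr (1 / s) * real T powr (1 / s) * L powr (1 - 1 / s) * \<rho> powr (\<alpha> / s)"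
    proof -
      have "Bc / lam\<^sup>2 = B0 * \<rho> powr \<alpha>" unfolding Bc_def B0_def by simp
      then show ?thesis using rewrite_bound[where L=L and T="real T" and Bz=B0 and \<rho>=\<rho> and \<alpha>=\<alpha> and s=s] L1 T3 B00 \<rho> s by simp
    qed
    have each: "ln (det (1\<^sub>m T + (1 / lam\<^sup>2) \<cdot>\<^sub>m gram_mat k zs)) / 2
        \<le> C * real T powr (1 / s) * ln (real T) powr (1 - 1 / s) * \<rho> powr (\<alpha> / s)"
      if zs: "zs \<in> {zs. set zs \<subseteq> Z \<and> distinct zs \<and> length zs = T}" for zs
    proof -
      have zsZ: "set zs \<subseteq> Z" and lz: "length zs = T" using zs by auto
      have "ln (det (1\<^sub>m T + (1 / lam\<^sup>2) \<cdot>\<^sub>m gram_mat k zs))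
         \<le> real D * lnA + (Bc / lam\<^sup>2) * real T * (if D = 0 then s / (s - 1) else real D powr (1 - s) / (s - 1))"
        using list_bound[OF zsZ lam _ \<sigma>0 mer sb Bc0 s, of D] kd lz unfolding Z_def lnA_def
        by (simp add: mult_ac)
      also have "\<dots> \<le> (2 * K + s / (s - 1)) * (B0 powr (1 / s) * real T powr (1 / s) * L powr (1 - 1 / s) * \<rho> powr (\<alpha> / s))"
        using D unfolding RW .
      finally show ?thesis unfolding C_def L_def by (simp add: mult_ac)
    qed
    have ne: "{zs. set zs \<subseteq> Z \<and> distinct zs \<and> length zs = T} \<noteq> {}"
      using exists_list[OF hypercube_infinite[OF \<rho>], of a T] unfolding Z_def by auto
    show "max_info_gain (hypercube a \<rho>) k lam T
        \<le> C * real T powr (1 / s) * ln (real T) powr (1 - 1 / s) * \<rho> powr (\<alpha> / s)"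
      unfolding max_info_gain_def Z_def[symmetric]
      by (rule cSUP_least[OF ne each])
  qed
qed


end
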